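(* Let $d\ge 1$ and let $P\in\mathbb{C}[x]$ be a degree-$d$ polynomial such that: $P$ has parity $(d\bmod 2)$; $|P(x)|\le 1$ for all $x\in[-1,1]$; $|P(x)|\ge 1$ for all $x\in(-\infty,-1]\cup[1,\infty)$; and if $d$ is even then $P(ix)P^*(ix)\ge 1$ for all $x\in\mathbb{R}$. Then there exists $\Phi=(\phi_1,\ldots,\phi_d)\in\mathbb{R}^d$ such that for all $x\in[-1,1]$ the top-left entry of $\prod_{j=1}^{d}\left(e^{i\phi_j\sigma_z}R(x)\right)$ equals $P(x)$. Moreover, for $x\in\{-1,1\}$ we have $P(x)=x^d\prod_{j=1}^de^{i\phi_j}$, and if $d$ is even then $P(0)=e^{-i\sum_{j=1}^d(-1)^j\phi_j}$.
   Context: $\sigma_z=\mathrm{diag}(1,-1)$. For $x\in[-1,1]$, $R(x)=\begin{pmatrix} x & \sqrt{1-x^2}\\ \sqrt{1-x^2} & -x\end{pmatrix}$. $\prod_{j=1}^d M_j=M_1M_2\cdots M_d$. For $P(x)=\sum_j a_jx^j$, $P^*(x)=\sum_j\overline{a_j}x^j$. Parity $(d\bmod 2)$ means $P$ is even if $d$ is even and odd if $d$ is odd. *)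

theory Defs
  imports "HOL-Analysis.Analysis" "HOL-Computational_Algebra.Polynomial"
begin

definition expSigmaZ :: "real \<Rightarrow> complex^2^2" where
  "expSigmaZ \<phi> = (\<chi> a b. if a = b then (if a = 1 then exp (\<i> * of_real \<phi>) else exp (- \<i> * of_real \<phi>)) else 0)"

definition Rmat :: "real \<Rightarrow> complex^2^2" where
  "Rmat x = (\<chi> a b. if a = 1 \<and> b = 1 then of_real x
                     else if a = 2 \<and> b = 2 then - of_real x
                     else of_real (sqrt (1 - x\<^sup>2)))"

text \<open>Ordered product prod_{j=1}^d (exp(i phi_j sigma_z) R(x)) = M_1 M_2 ... M_d,
  where the phase list is [phi_1, ..., phi_d].\<close>
definition qspProd :: "real list \<Rightarrow> real \<Rightarrow> complex^2^2" where
  "qspProd \<Phi> x = foldr (\<lambda>\<phi> M. (expSigmaZ \<phi> ** Rmat x) ** M) \<Phi> (mat 1)"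

definition conj_poly :: "complex poly \<Rightarrow> complex poly" where
  "conj_poly P = map_poly cnj P"

definition has_parity :: "complex poly \<Rightarrow> nat \<Rightarrow> bool" where
  "has_parity P d \<longleftrightarrow> (\<forall>z. poly P (- z) = (-1) ^ d * poly P z)"

end

theory Submission imports Defs "HOL-Computational_Algebra.Fundamental_Theorem_Algebra" begin

definition Um :: "nat \<Rightarrow> complex \<Rightarrow> complex \<Rightarrow> real \<Rightarrow> complex^2^2" where
 "Um d p q x = (\<chi> a b. if a = 1 then (if b = 1 then p else of_real (sqrt(1-x\<^sup>2)) * q)
     else (if b = 1 then - ((-1)^d) * of_real (sqrt(1-x\<^sup>2)) * cnj q else (-1)^d * cnj p))"

lemma mm2: "((A::complex^2^2) ** B) $ i $ j = A$i$1 * B$1$j + A$i$2 * B$2$j"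
  by (simp add: matrix_matrix_mult_def sum_2)

lemma alg4:
  fixes s x E F dl p q cq cp :: complex
  assumes "s * s = 1 - x^2" "E * F = 1" "dl*dl = 1"
  shows "E * x * (F * x * p + dl * E * (1 - x\<^sup>2) * cq) - E * s * (dl * s * (E * x * cq - dl * F * p)) = p"
   "E * x * (s * (F * x * q - dl * E * cp)) + E * s * (dl * (E * x * cp + dl * F * (1 - x\<^sup>2) * q)) = s * q"
   "F * s * (F * x * p + dl * E * (1 - x\<^sup>2) * cq) + F * x * (dl * s * (E * x * cq - dl * F * p)) = dl * s * cq"
   "F * s * (s * (F * x * q - dl * E * cp)) - F * x * (dl * (E * x * cp + dl * F * (1 - x\<^sup>2) * q)) = - (dl * cp)"
  using assms by algebra+

lemma step_mat:
  assumes x: "-1 \<le> x" "x \<le> 1"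
    and p': "p' = exp (- \<i> * of_real \<phi>) * of_real x * p - (-1)^(Suc d) * exp (\<i> * of_real \<phi>) * of_real (1-x\<^sup>2) * cnj q"
    and q': "q' = exp (- \<i> * of_real \<phi>) * of_real x * q + (-1)^(Suc d) * exp (\<i> * of_real \<phi>) * cnj p"
  shows "(expSigmaZ \<phi> ** Rmat x) ** Um d p' q' x = Um (Suc d) p q x"
proof -
  define E where "E = exp (\<i> * of_real \<phi>)"
  define F where "F = exp (- \<i> * of_real \<phi>)"
  have EF: "E * F = 1" unfolding E_def F_def by (simp flip: exp_add)
  have cE: "cnj E = F" unfolding E_def F_def by (simp add: exp_cnj)
  have cF: "cnj F = E" unfolding E_def F_def by (simp add: exp_cnj)
  define s where "s = sqrt (1 - x\<^sup>2)"
  have s2: "complex_of_real s * complex_of_real s = 1 - (complex_of_real x)^2"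
  proof -
    have "x\<^sup>2 \<le> 1" using x by (metis abs_le_iff abs_square_le_1 minus_le_iff)
    then have "s * s = 1 - x\<^sup>2" unfolding s_def by simp
    then show ?thesis by (metis of_real_1 of_real_diff of_real_mult of_real_power)
  qed
  have e: "expSigmaZ \<phi> $ 1 $ 1 = E" "expSigmaZ \<phi> $ 1 $ 2 = 0" "expSigmaZ \<phi> $ 2 $ 1 = 0" "expSigmaZ \<phi> $ 2 $ 2 = F"
    by (simp_all add: expSigmaZ_def E_def F_def)
  have r: "Rmat x $ 1 $ 1 = x" "Rmat x $ 1 $ 2 = s" "Rmat x $ 2 $ 1 = s" "Rmat x $ 2 $ 2 = - x"
    by (simp_all add: Rmat_def s_def)
  have u: "\<And>d p q. Um d p q x $ 1 $ 1 = p" "\<And>d p q. Um d p q x $ 1 $ 2 = complex_of_real s * q"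
     "\<And>d p q. Um d p q x $ 2 $ 1 = - ((-1)^d) * complex_of_real s * cnj q" "\<And>d p q. Um d p q x $ 2 $ 2 = (-1)^d * cnj p"
    by (simp_all add: Um_def s_def)
  have p'': "p' = F * x * p - (-1)^(Suc d) * E * (1-x\<^sup>2) * cnj q" using p' by (simp add: E_def F_def)
  have q'': "q' = F * x * q + (-1)^(Suc d) * E * cnj p" using q' by (simp add: E_def F_def)
  have cs: "cnj (complex_of_real s) = s" "cnj (complex_of_real x) = x" by simp_all
  have dd: "((-1::complex)^d) * (-1)^d = 1" by (simp flip: power_add)
  show ?thesis
    unfolding vec_eq_iff forall_2 mm2 e r u
    unfolding p'' q''
    apply (simp add: cE cF u)
    using alg4[OF s2 EF dd] by simp
qed

lemma poly_conj_poly: "poly (conj_poly P) z = cnj (poly P (cnj z))"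
  unfolding conj_poly_def by (induction P) (auto simp: map_poly_pCons)

lemma coeff_conj_poly: "coeff (conj_poly P) n = cnj (coeff P n)"
  unfolding conj_poly_def by (simp add: coeff_map_poly)

lemma degree_conj_poly: "degree (conj_poly P) = degree P"
  unfolding conj_poly_def by (rule degree_map_poly) auto

lemma coeff_mult_bound:
  fixes p q :: "'a::idom poly"
  assumes "degree p \<le> m" "degree q \<le> k"
  shows "coeff (p * q) (m + k) = coeff p m * coeff q k"
proof (cases "degree p = m \<and> degree q = k")
  case True then show ?thesis using coeff_mult_degree_sum[of p q] by simp
next
  case False
  then have "coeff p m = 0 \<or> coeff q k = 0" using assms by (metis coeff_eq_0 le_neq_implies_less)
  moreover have "degree (p*q) < m + k" using False assms degree_mult_le[of p q]
    by (metis add_le_mono le_neq_implies_less order.trans order_le_less_trans add_less_le_mono add_le_less_mono)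
  ultimately show ?thesis by (auto simp: coeff_eq_0)
qed

lemma parity_coeff:
  fixes P :: "complex poly"
  assumes "\<forall>z. poly P (-z) = (-1)^m * poly P z" "odd (k + m)"
  shows "coeff P k = 0"
proof -
  have "poly (pcompose P [:0,-1:]) = poly (smult ((-1)^m) P)"
    using assms(1) by (auto simp: poly_pcompose)
  then have e: "pcompose P [:0,-1:] = smult ((-1)^m) P" by (simp add: poly_eq_poly_eq_iff)
  have "(-1)^k * coeff P k = (-1)^m * coeff P k"
    using arg_cong[OF e, of "\<lambda>p. coeff p k"] by (simp add: coeff_pcompose_linear)
  moreover have "(-1::complex)^k = - ((-1)^m)"
    using assms(2) by (cases "even k") (auto simp: minus_one_power_iff)
  ultimately show ?thesis by (cases "even m") auto
qed


lemma quad_mult: "[:1,0,-1:] * R = R - pCons 0 (pCons 0 (R::complex poly))"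
  by (simp add: mult_pCons_left algebra_simps)

lemma poly_quad: "poly [:1,0,-1:] z = 1 - (z::complex)^2"
  by (simp add: power2_eq_square)

lemma exp_i_Arg: assumes "cmod c = 1" shows "exp (\<i> * of_real (Arg c)) = c"
proof -
  have "c \<noteq> 0" using assms by auto
  then have "cis (Arg c) = sgn c" by (simp add: cis_Arg)
  also have "sgn c = c" using assms by (simp add: sgn_div_norm)
  finally show ?thesis by (simp add: cis_conv_exp mult.commute)
qed

lemma choose_phi:
  fixes a b dl :: complex
  assumes "a * cnj a = b * cnj b" "dl * dl = 1"
  shows "\<exists>\<phi>::real. exp (- \<i> * of_real \<phi>) * a + dl * exp (\<i> * of_real \<phi>) * cnj b = 0"
proof (cases "b = 0")
  case True
  then have "a = 0" using assms(1) by (metis complex_cnj_zero_iff mult_eq_0_iff)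
  then show ?thesis using True by auto
next
  case False
  define w where "w = - dl * a / cnj b"
  have "cmod w = 1"
  proof -
    have "cmod a * cmod a = cmod b * cmod b"
      using arg_cong[OF assms(1), of cmod] by (simp add: norm_mult)
    then have "(cmod a)^2 = (cmod b)^2" by (simp add: power2_eq_square)
    then have "cmod a = cmod b" by (simp add: power2_eq_iff_nonneg)
    moreover have "cmod dl = 1"
      proof -
    have "cmod dl * cmod dl = 1 * 1" using assms(2) by (metis norm_mult norm_one mult_1)
    then have "(cmod dl)^2 = 1^2" by (simp add: power2_eq_square)
    then show ?thesis by (metis norm_ge_zero zero_le_one power2_eq_iff_nonneg)
  qed
    ultimately show ?thesis using False by (simp add: w_def norm_mult norm_divide)
  qed
  define \<phi> where "\<phi> = Arg w / 2"
  define H where "H = exp (\<i> * of_real \<phi>)"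
  define G where "G = exp (- \<i> * of_real \<phi>)"
  have HH: "H * H = w"
    using exp_i_Arg[OF \<open>cmod w = 1\<close>] by (simp add: H_def \<phi>_def flip: exp_add)
  have GH: "G * H = 1" by (simp add: G_def H_def flip: exp_add)
  have cb: "cnj b \<noteq> 0" using False by simp
  have "H * H * cnj b = - dl * a" using HH cb by (simp add: w_def)
  then have "dl * (H * H * cnj b) = - a" using assms(2)
    by (metis mult.assoc mult_1 mult_minus_left mult_minus_right)
  then have "G * a + dl * H * cnj b = 0" using GH by algebra
  then show ?thesis unfolding G_def H_def by blast
qed

lemma base_case:
  fixes P :: "complex poly"
  assumes "degree P = 0" "P * conj_poly P = 1"
  shows "\<exists>\<gamma>. \<forall>x. mat 1 ** expSigmaZ \<gamma> = Um 0 (poly P x) 0 x"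
proof -
  obtain c where Pc: "P = [:c:]" using assms(1) by (metis degree_eq_zeroE)
  have "c * cnj c = 1" using arg_cong[OF assms(2), of "\<lambda>p. coeff p 0"]
    by (simp add: Pc coeff_conj_poly coeff_mult_0 del: mult_pCons_left mult_pCons_right)
  then have "cmod c = 1"
    by (metis complex_mult_cnj complex_norm_square norm_ge_zero of_real_eq_1_iff power2_eq_iff_nonneg zero_le_one power_one)
  define \<gamma> where "\<gamma> = Arg c"
  have e1: "exp (\<i> * of_real \<gamma>) = c" using exp_i_Arg[OF \<open>cmod c = 1\<close>] by (simp add: \<gamma>_def)
  have "exp (- \<i> * of_real \<gamma>) = cnj (exp (\<i> * of_real \<gamma>))" by (simp add: exp_cnj)
  then have e2: "exp (- (\<i> * of_real \<gamma>)) = cnj c" using e1 by simp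
  show ?thesis
    by (rule exI[of _ \<gamma>]) (simp add: vec_eq_iff forall_2 expSigmaZ_def Um_def Pc e1 e2)
qed


lemma alg5:
  fixes p pc q qc E F dl z w :: complex
  assumes "p*pc + w*(q*qc) = 1" "E*F=1" "dl*dl=1" "w = 1 - z^2"
  shows "(F*z*p - dl*E*w*qc) * (E*z*pc - dl*F*w*q) + w * ((F*z*q + dl*E*pc)*(E*z*qc + dl*F*p)) = 1"
  using assms by algebra

lemma qsp_exists:
  fixes P Q :: "complex poly"
  assumes "degree P \<le> d" "degree Q \<le> d - 1" "d = 0 \<longrightarrow> Q = 0"
    "\<forall>z. poly P (-z) = (-1)^d * poly P z" "\<forall>z. poly Q (-z) = (-1)^(Suc d) * poly Q z"
    "P * conj_poly P + [:1,0,-1:] * (Q * conj_poly Q) = 1"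
  shows "\<exists>\<Phi> \<gamma>. length \<Phi> = d \<and> (\<forall>x. -1 \<le> x \<and> x \<le> 1 \<longrightarrow>
            qspProd \<Phi> x ** expSigmaZ \<gamma> = Um d (poly P x) (poly Q x) x)"
  using assms
proof (induction d arbitrary: P Q)
  case 0
  then have "Q = 0" "degree P = 0" by auto
  with 0(6) have "P * conj_poly P = 1" by simp
  then obtain \<gamma> where "\<forall>x. mat 1 ** expSigmaZ \<gamma> = Um 0 (poly P x) 0 x"
    using base_case \<open>degree P = 0\<close> by blast
  then show ?case using \<open>Q = 0\<close> by (intro exI[of _ "[]"] exI[of _ \<gamma>]) (simp add: qspProd_def)
next
  case (Suc n)
  define dl :: complex where "dl = (-1)^(Suc n)"
  have dd: "dl * dl = 1" unfolding dl_def by (simp flip: power_add)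
  define a where "a = coeff P (Suc n)"
  define b where "b = coeff Q n"
  have hab: "a * cnj a = b * cnj b"
  proof -
    have c1: "coeff (P * conj_poly P) (Suc n + Suc n) = a * cnj a"
      using coeff_mult_bound[of P "Suc n" "conj_poly P" "Suc n"] Suc.prems(1)
      by (simp add: degree_conj_poly coeff_conj_poly a_def)
    have dQ: "degree (Q * conj_poly Q) \<le> n + n"
      using degree_mult_le[of Q "conj_poly Q"] Suc.prems(2) by (simp add: degree_conj_poly)
    have c2: "coeff (Q * conj_poly Q) (n + n) = b * cnj b"
      using coeff_mult_bound[of Q n "conj_poly Q" n] Suc.prems(2)
      by (simp add: degree_conj_poly coeff_conj_poly b_def)
    have c3: "coeff (Q * conj_poly Q) (Suc (Suc (n + n))) = 0"
      using dQ by (simp add: coeff_eq_0)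
    have "coeff (P * conj_poly P + [:1,0,-1:] * (Q * conj_poly Q)) (Suc (Suc (n + n))) = 0"
      using Suc.prems(6) by simp
    then show ?thesis using c1 c2 c3 by (simp add: quad_mult)
  qed
  obtain \<phi> :: real where h\<phi>: "exp (- \<i> * of_real \<phi>) * a + dl * exp (\<i> * of_real \<phi>) * cnj b = 0"
    using choose_phi[OF hab dd] by blast
  define E where "E = exp (\<i> * of_real \<phi>)"
  define F where "F = exp (- \<i> * of_real \<phi>)"
  have EF: "E * F = 1" unfolding E_def F_def by (simp flip: exp_add)
  have cE: "cnj E = F" unfolding E_def F_def by (simp add: exp_cnj)
  have cF: "cnj F = E" unfolding E_def F_def by (simp add: exp_cnj)
  have cdl: "cnj dl = dl" unfolding dl_def by simp
  define P' where "P' = smult F (pCons 0 P) - smult (dl * E) ([:1,0,-1:] * conj_poly Q)"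
  define Q' where "Q' = smult F (pCons 0 Q) + smult (dl * E) (conj_poly P)"
  have pP: "\<And>z. poly P' z = F * z * poly P z - dl * E * (1 - z^2) * cnj (poly Q (cnj z))"
    by (simp add: P'_def poly_conj_poly poly_quad power2_eq_square algebra_simps)
  have pQ: "\<And>z. poly Q' z = F * z * poly Q z + dl * E * cnj (poly P (cnj z))"
    by (simp add: Q'_def poly_conj_poly)
  have parP: "\<forall>z. poly P' (-z) = (-1)^n * poly P' z"
    using Suc.prems(4,5) by (simp add: pP dl_def algebra_simps)
  have parQ: "\<forall>z. poly Q' (-z) = (-1)^(Suc n) * poly Q' z"
    using Suc.prems(4,5) by (simp add: pQ dl_def algebra_simps)
  have degP': "degree P' \<le> n"
  proof (rule degree_le, intro allI impI)
    fix i assume "n < i"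
    show "coeff P' i = 0"
    proof (cases "i = Suc n")
      case True
      then show ?thesis using parity_coeff[OF parP, of i] by simp
    next
      case False
      then obtain j where j: "i = Suc (Suc j)" "n \<le> j" using \<open>n < i\<close>
        by (metis Suc_le_D Suc_le_eq le_less_Suc_eq not_less_eq_eq)
      have cP: "coeff P' i = F * coeff P (Suc j) - dl * E * (cnj (coeff Q (Suc (Suc j))) - cnj (coeff Q j))"
        by (simp add: P'_def quad_mult coeff_conj_poly j)
      have "coeff Q (Suc (Suc j)) = 0" using Suc.prems(2) j by (intro coeff_eq_0) simp
      show ?thesis
      proof (cases "j = n")
        case True
        then show ?thesis using cP h\<phi> \<open>coeff Q (Suc (Suc j)) = 0\<close>
          by (simp add: a_def b_def E_def F_def algebra_simps)
      next
        case False
        then have "coeff P (Suc j) = 0" "coeff Q j = 0"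
          using Suc.prems(1,2) j by (auto intro!: coeff_eq_0)
        then show ?thesis using cP \<open>coeff Q (Suc (Suc j)) = 0\<close> by simp
      qed
    qed
  qed
  have cQ0: "\<forall>i\<ge>n. coeff Q' i = 0"
  proof (intro allI impI)
    fix i assume "n \<le> i"
    show "coeff Q' i = 0"
    proof (cases "i = n")
      case True
      then show ?thesis using parity_coeff[OF parQ, of i] by simp
    next
      case False
      then obtain j where j: "i = Suc j" "n \<le> j" using \<open>n \<le> i\<close>
        by (metis le_neq_implies_less Suc_le_eq less_imp_Suc_add le_add1 add_Suc)
      have cQ: "coeff Q' i = F * coeff Q j + dl * E * cnj (coeff P (Suc j))"
        by (simp add: Q'_def coeff_conj_poly j)
      show ?thesis
      proof (cases "j = n")
        case True
        have "cnj (exp (- \<i> * of_real \<phi>) * a + dl * exp (\<i> * of_real \<phi>) * cnj b) = 0"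
          using h\<phi> by simp
        then have "E * cnj a + dl * F * b = 0"
          by (simp add: E_def F_def exp_cnj cdl)
        then have "dl * (E * cnj a + dl * F * b) = 0" by simp
        then have "dl * E * cnj a + F * b = 0" using dd by (simp add: algebra_simps)
        then show ?thesis using cQ True by (simp add: a_def b_def algebra_simps)
      next
        case False
        then have "coeff P (Suc j) = 0" "coeff Q j = 0"
          using Suc.prems(1,2) j by (auto intro!: coeff_eq_0)
        then show ?thesis using cQ by simp
      qed
    qed
  qed
  have degQ': "degree Q' \<le> n - 1"
    using cQ0 by (intro degree_le) auto
  have Q'0: "n = 0 \<longrightarrow> Q' = 0"
    using cQ0 by (auto intro: poly_eqI)
  have idt: "P' * conj_poly P' + [:1,0,-1:] * (Q' * conj_poly Q') = 1"
  proof (rule poly_eq_poly_eq_iff[THEN iffD1], rule ext)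
    fix z :: complex
    have h: "poly P z * cnj (poly P (cnj z)) + (1 - z^2) * (poly Q z * cnj (poly Q (cnj z))) = 1"
      using arg_cong[OF Suc.prems(6), of "\<lambda>p. poly p z"] by (simp add: poly_conj_poly poly_quad power2_eq_square algebra_simps)
    have e1: "cnj (poly P' (cnj z)) = E * z * cnj (poly P (cnj z)) - dl * F * (1 - z^2) * poly Q z"
      by (simp add: pP cE cF cdl)
    have e2: "cnj (poly Q' (cnj z)) = E * z * cnj (poly Q (cnj z)) + dl * F * poly P z"
      by (simp add: pQ cE cF cdl)
    show "poly (P' * conj_poly P' + [:1,0,-1:] * (Q' * conj_poly Q')) z = poly 1 z"
      unfolding poly_add poly_mult poly_conj_poly poly_quad e1 e2
      unfolding pP pQ poly_1 by (rule alg5[OF h EF dd refl])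
  qed
  obtain \<Phi> \<gamma> where IH: "length \<Phi> = n" "\<forall>x. -1 \<le> x \<and> x \<le> 1 \<longrightarrow>
            qspProd \<Phi> x ** expSigmaZ \<gamma> = Um n (poly P' x) (poly Q' x) x"
    using Suc.IH[OF degP' degQ' Q'0 parP parQ idt] by blast
  show ?case
  proof (intro exI[of _ "\<phi> # \<Phi>"] exI[of _ \<gamma>] conjI allI impI)
    show "length (\<phi> # \<Phi>) = Suc n" using IH by simp
    fix x :: real assume x: "-1 \<le> x \<and> x \<le> 1"
    have "qspProd (\<phi> # \<Phi>) x ** expSigmaZ \<gamma> = (expSigmaZ \<phi> ** Rmat x) ** (qspProd \<Phi> x ** expSigmaZ \<gamma>)"
      by (simp add: qspProd_def matrix_mul_assoc)
    also have "\<dots> = (expSigmaZ \<phi> ** Rmat x) ** Um n (poly P' x) (poly Q' x) x" using IH x by simp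
    also have "\<dots> = Um (Suc n) (poly P x) (poly Q x) x"
      by (rule step_mat) (use x in \<open>simp_all add: pP pQ E_def F_def dl_def\<close>)
    finally show "qspProd (\<phi> # \<Phi>) x ** expSigmaZ \<gamma> = Um (Suc n) (poly P x) (poly Q x) x" .
  qed
qed


lemma poly_lim_lower:
  fixes L :: "complex poly"
  assumes "at r within S \<noteq> bot" "eventually (\<lambda>y. c \<le> Re (poly L (of_real y))) (at r within S)"
  shows "c \<le> Re (poly L (of_real r))"
proof -
  have "((\<lambda>y. Re (poly L (of_real y))) \<longlongrightarrow> Re (poly L (of_real r))) (at r within S)"
    by (intro tendsto_intros tendsto_ident_at)
  then show ?thesis using assms tendsto_lowerbound by blast
qed

lemma poly_lim_upper:
  fixes L :: "complex poly"
  assumes "at r within S \<noteq> bot" "eventually (\<lambda>y. Re (poly L (of_real y)) \<le> c) (at r within S)"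
  shows "Re (poly L (of_real r)) \<le> c"
proof -
  have "((\<lambda>y. Re (poly L (of_real y))) \<longlongrightarrow> Re (poly L (of_real r))) (at r within S)"
    by (intro tendsto_intros tendsto_ident_at)
  then show ?thesis using assms tendsto_upperbound by blast
qed

lemma poly_lim_Im:
  fixes L :: "complex poly"
  assumes "at r within S \<noteq> bot" "eventually (\<lambda>y. Im (poly L (of_real y)) = 0) (at r within S)"
  shows "Im (poly L (of_real r)) = 0"
proof -
  have "((\<lambda>y. Im (poly L (of_real y))) \<longlongrightarrow> Im (poly L (of_real r))) (at r within S)"
    by (intro tendsto_intros tendsto_ident_at)
  moreover have "eventually (\<lambda>y. 0 \<le> Im (poly L (of_real y))) (at r within S)"
    "eventually (\<lambda>y. Im (poly L (of_real y)) \<le> 0) (at r within S)"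
    using assms(2) by (auto elim: eventually_mono)
  ultimately show ?thesis using assms(1) tendsto_lowerbound tendsto_upperbound
    by (metis order.antisym)
qed

lemma ev_notin_finite:
  fixes A :: "real set"
  assumes "finite A"
  shows "eventually (\<lambda>y. y \<notin> A) (at r)"
proof -
  have "eventually (\<lambda>y. \<forall>a\<in>A. y \<noteq> a) (at r)"
    using assms by (intro eventually_ball_finite) (auto intro: eventually_neq_at_within)
  then show ?thesis by (auto elim: eventually_mono)
qed

definition ok :: "complex poly \<Rightarrow> real \<Rightarrow> bool" where
  "ok K y \<longleftrightarrow> Im (poly K (of_real y)) = 0 \<and> 0 \<le> Re (poly K (of_real y))"

lemma ok_closure:
  assumes "finite A" "\<forall>y. y \<notin> A \<longrightarrow> ok K y"
  shows "ok K r"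
proof -
  have ev: "eventually (\<lambda>y. ok K y) (at r)"
    using ev_notin_finite[OF assms(1), of r] assms(2) by (auto elim: eventually_mono)
  have nb: "at r \<noteq> (bot :: real filter)" using trivial_limit_at by auto
  have "eventually (\<lambda>y. Im (poly K (of_real y)) = 0) (at r)"
    "eventually (\<lambda>y. 0 \<le> Re (poly K (of_real y))) (at r)"
    using ev unfolding ok_def by (auto elim: eventually_mono)
  then show ?thesis unfolding ok_def
    using poly_lim_Im[OF nb] poly_lim_lower[OF nb] by blast
qed

lemma conj_poly_mult: "conj_poly (p * q) = conj_poly p * conj_poly q"
  by (rule poly_eq_poly_eq_iff[THEN iffD1]) (auto simp: poly_conj_poly)

lemma conj_poly_lin: "conj_poly [:-a, 1:] = [:- cnj a, 1:]"
  by (rule poly_eq_poly_eq_iff[THEN iffD1]) (auto simp: poly_conj_poly)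

lemma conj_poly_const: "conj_poly [:a:] = [:cnj a:]"
  by (rule poly_eq_poly_eq_iff[THEN iffD1]) (auto simp: poly_conj_poly)

lemma infinite_reals_c: "infinite (range (complex_of_real))"
  by (metis finite_imageD inj_of_real infinite_UNIV_char_0)

lemma conj_self:
  assumes "\<forall>y::real. Im (poly K (of_real y)) = 0"
  shows "conj_poly K = K"
proof (rule ccontr)
  assume ne: "conj_poly K \<noteq> K"
  have "range complex_of_real \<subseteq> {z. poly (K - conj_poly K) z = 0}"
  proof
    fix z assume "z \<in> range complex_of_real"
    then obtain y where "z = of_real y" by auto
    have "poly (K - conj_poly K) (of_real y) = poly K (of_real y) - cnj (poly K (of_real y))"
      by (simp add: poly_conj_poly)
    also have "\<dots> = 0" using assms by (simp add: complex_eq_iff)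
    finally show "z \<in> {z. poly (K - conj_poly K) z = 0}" using \<open>z = of_real y\<close> by simp
  qed
  moreover have "finite {z. poly (K - conj_poly K) z = 0}"
    using ne by (intro poly_roots_finite) auto
  ultimately show False using infinite_reals_c finite_subset by blast
qed

lemma ok_scale:
  assumes "ok K y" "poly K (of_real y) = of_real c * poly L (of_real y)" "c > 0"
  shows "ok L y"
proof -
  have "Im (poly K (of_real y)) = c * Im (poly L (of_real y))"
       "Re (poly K (of_real y)) = c * Re (poly L (of_real y))" using assms(2) by simp_all
  then show ?thesis using assms(1,3) unfolding ok_def by (simp add: zero_le_mult_iff)
qed

lemma FR:
  fixes K :: "complex poly"
  assumes "\<forall>y. ok K y"
  shows "\<exists>q. K = q * conj_poly q"
  using assms
proof (induction "degree K" arbitrary: K rule: less_induct)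
  case less
  show ?case
  proof (cases "degree K = 0")
    case True
    then obtain c where Kc: "K = [:c:]" by (metis degree_eq_zeroE)
    have "ok K 0" using less.prems by simp
    then have c: "Im c = 0" "0 \<le> Re c" by (simp_all add: ok_def Kc)
    define q where "q = [:complex_of_real (sqrt (Re c)):]"
    have "q * conj_poly q = [:of_real (sqrt (Re c) * sqrt (Re c)):]"
      by (simp add: q_def conj_poly_const del: of_real_mult real_sqrt_mult_self add: of_real_mult[symmetric])
    also have "\<dots> = K" using c by (simp add: Kc complex_eq_iff)
    finally show ?thesis by metis
  next
    case False
    then obtain a where root: "poly K a = 0"
      using fundamental_theorem_of_algebra[of K] constant_degree[of K] False by blast
    have Kne: "K \<noteq> 0" using False by auto
    have cK: "conj_poly K = K" using less.prems unfolding ok_def by (intro conj_self) blast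
    show ?thesis
    proof (cases "Im a = 0")
      case True
      define r where "r = Re a"
      have ar: "a = of_real r" using True by (simp add: r_def complex_eq_iff)
      obtain L where KL: "K = [:-a,1:] * L" using root poly_eq_0_iff_dvd by (metis dvdE)
      have pK: "\<And>y. poly K (of_real y) = of_real (y - r) * poly L (of_real y)"
        by (simp add: KL ar algebra_simps)
      have Lim: "Im (poly L (of_real y)) = 0" if "y \<noteq> r" for y
      proof -
        have "Im (poly K (of_real y)) = (y - r) * Im (poly L (of_real y))" by (simp add: pK)
        then show ?thesis using spec[OF less.prems, of y] that by (simp add: ok_def)
      qed
      have Lre: "(y - r) * Re (poly L (of_real y)) \<ge> 0" for y
      proof -
        have "Re (poly K (of_real y)) = (y - r) * Re (poly L (of_real y))" by (simp add: pK)
        then show ?thesis using spec[OF less.prems, of y] by (simp add: ok_def)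
      qed
      have nbr: "at_right r \<noteq> bot" "at_left r \<noteq> bot" by simp_all
      have Lpos: "0 \<le> Re (poly L (of_real y))" if "r < y" for y
        using Lre[of y] that by (auto simp: zero_le_mult_iff)
      have Lneg: "Re (poly L (of_real y)) \<le> 0" if "y < r" for y
        using Lre[of y] that by (auto simp: zero_le_mult_iff)
      have "eventually (\<lambda>y. 0 \<le> Re (poly L (of_real y))) (at_right r)"
        unfolding eventually_at_right_field
        by (rule exI[of _ "r+1"]) (auto intro: Lpos)
      then have L1: "0 \<le> Re (poly L (of_real r))" using poly_lim_lower[OF nbr(1)] by blast
      have "eventually (\<lambda>y. Re (poly L (of_real y)) \<le> 0) (at_left r)"
        unfolding eventually_at_left_field
        by (rule exI[of _ "r-1"]) (auto intro: Lneg)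
      then have L2: "Re (poly L (of_real r)) \<le> 0" using poly_lim_upper[OF nbr(2)] by blast
      have "eventually (\<lambda>y. Im (poly L (of_real y)) = 0) (at r)"
        using eventually_neq_at_within[of r r UNIV] by (auto elim: eventually_mono intro: Lim)
      then have L3: "Im (poly L (of_real r)) = 0" using poly_lim_Im[of r UNIV] trivial_limit_at by blast
      have "poly L a = 0" using L1 L2 L3 by (simp add: ar complex_eq_iff)
      then obtain L2 where LL: "L = [:-a,1:] * L2" using poly_eq_0_iff_dvd by (metis dvdE)
      have okL2: "ok L2 y" if "y \<noteq> r" for y
      proof (rule ok_scale)
        show "ok K y" using less.prems by simp
        show "poly K (of_real y) = of_real ((y - r)^2) * poly L2 (of_real y)"
          by (simp add: KL LL ar power2_eq_square algebra_simps)
        show "(y - r)^2 > 0" using that by simp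
      qed
      then have okL2': "\<forall>y. ok L2 y" using ok_closure[of "{r}" L2] by blast
      have "L2 \<noteq> 0" using Kne KL LL by auto
      then have "degree L2 < degree K" unfolding KL LL
        by (simp add: degree_mult_eq del: mult_pCons_left)
      then obtain q2 where q2: "L2 = q2 * conj_poly q2" using less.hyps okL2' by blast
      have "conj_poly ([:-a,1:] * q2) = [:-a,1:] * conj_poly q2"
        by (simp add: conj_poly_mult conj_poly_lin ar del: mult_pCons_left)
      note cc = this
      have "K = ([:-a,1:] * q2) * conj_poly ([:-a,1:] * q2)"
        unfolding cc KL LL q2 by (simp only: mult_ac)
      then show ?thesis by blast
    next
      case False
      have root2: "poly K (cnj a) = 0"
        using arg_cong[OF cK, of "\<lambda>p. poly p (cnj a)"] root by (simp add: poly_conj_poly)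
      obtain L where KL: "K = [:-a,1:] * L" using root poly_eq_0_iff_dvd by (metis dvdE)
      have "cnj a \<noteq> a" using False by (simp add: complex_eq_iff)
      then have "poly L (cnj a) = 0" using root2 by (simp add: KL)
      then obtain L2 where LL: "L = [:- cnj a,1:] * L2" using poly_eq_0_iff_dvd by (metis dvdE)
      have okL2: "ok L2 y" for y
      proof (rule ok_scale)
        show "ok K y" using less.prems by simp
        have "(complex_of_real y - a) * (complex_of_real y - cnj a) = of_real ((cmod (of_real y - a))^2)"
          using complex_norm_square[of "of_real y - a"] by simp
        moreover have "poly K (of_real y) = ((complex_of_real y - a) * (complex_of_real y - cnj a)) * poly L2 (of_real y)"
          by (simp add: KL LL algebra_simps)
        ultimately show "poly K (of_real y) = of_real ((cmod (of_real y - a))^2) * poly L2 (of_real y)"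
          by simp
        have "of_real y - a \<noteq> 0" using False by (auto simp: complex_eq_iff)
        then show "(cmod (of_real y - a))^2 > 0" by simp
      qed
      have "L2 \<noteq> 0" using Kne KL LL by auto
      then have "degree L2 < degree K" unfolding KL LL
        by (simp add: degree_mult_eq del: mult_pCons_left)
      then obtain q2 where q2: "L2 = q2 * conj_poly q2" using less.hyps okL2 by blast
      have "conj_poly ([:-a,1:] * q2) = [:-cnj a,1:] * conj_poly q2"
        by (simp add: conj_poly_mult conj_poly_lin del: mult_pCons_left)
      note cc = this
      have "K = ([:-a,1:] * q2) * conj_poly ([:-a,1:] * q2)"
        unfolding cc KL LL q2 by (simp only: mult_ac)
      then show ?thesis by blast
    qed
  qed
qed


lemma qsp_pm1:
  assumes "x = 1 \<or> x = -1"
  shows "qspProd \<Phi> x $ 1 $ 1 = of_real x ^ length \<Phi> * (\<Prod>j<length \<Phi>. exp (\<i> * of_real (\<Phi> ! j)))"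
proof (induction \<Phi>)
  case Nil
  then show ?case by (simp add: qspProd_def mat_def)
next
  case (Cons \<phi> \<Phi>)
  have s: "sqrt (1 - x\<^sup>2) = 0" using assms by auto
  have "qspProd (\<phi> # \<Phi>) x = (expSigmaZ \<phi> ** Rmat x) ** qspProd \<Phi> x" by (simp add: qspProd_def)
  then have "qspProd (\<phi> # \<Phi>) x $ 1 $ 1 = exp (\<i> * of_real \<phi>) * of_real x * qspProd \<Phi> x $ 1 $ 1"
    by (simp add: mm2 expSigmaZ_def Rmat_def s)
  then show ?case using Cons by (simp add: prod.lessThan_Suc_shift mult_ac del: prod.lessThan_Suc)
qed

lemma qsp_zero:
  fixes \<Phi> :: "real list"
  defines "S \<equiv> (\<Sum>j<length \<Phi>. (-1)^j * \<Phi> ! j)"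
  shows "(even (length \<Phi>) \<longrightarrow> qspProd \<Phi> 0 $ 1 $ 1 = exp (\<i> * of_real S) \<and> qspProd \<Phi> 0 $ 2 $ 1 = 0) \<and>
         (odd (length \<Phi>) \<longrightarrow> qspProd \<Phi> 0 $ 2 $ 1 = exp (- \<i> * of_real S) \<and> qspProd \<Phi> 0 $ 1 $ 1 = 0)"
  unfolding S_def
proof (induction \<Phi>)
  case Nil
  then show ?case by (simp add: qspProd_def mat_def)
next
  case (Cons \<phi> \<Phi>)
  define S' where "S' = (\<Sum>j<length \<Phi>. (-1)^j * \<Phi> ! j)"
  have SS: "(\<Sum>j<length (\<phi> # \<Phi>). (-1)^j * (\<phi> # \<Phi>) ! j) = \<phi> - S'"
    by (simp add: S'_def sum.lessThan_Suc_shift sum_negf del: sum.lessThan_Suc)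
  have q: "qspProd (\<phi> # \<Phi>) 0 = (expSigmaZ \<phi> ** Rmat 0) ** qspProd \<Phi> 0" by (simp add: qspProd_def)
  have e11: "qspProd (\<phi> # \<Phi>) 0 $ 1 $ 1 = exp (\<i> * of_real \<phi>) * qspProd \<Phi> 0 $ 2 $ 1"
    unfolding q by (simp add: mm2 expSigmaZ_def Rmat_def)
  have e21: "qspProd (\<phi> # \<Phi>) 0 $ 2 $ 1 = exp (- \<i> * of_real \<phi>) * qspProd \<Phi> 0 $ 1 $ 1"
    unfolding q by (simp add: mm2 expSigmaZ_def Rmat_def)
  show ?case
    unfolding SS e11 e21 using Cons.IH unfolding S'_def[symmetric]
    by (auto simp: algebra_simps simp flip: exp_add)
qed


lemma even_poly_sq:
  fixes G :: "complex poly"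
  assumes "\<forall>k. odd k \<longrightarrow> coeff G k = 0"
  shows "\<exists>H. \<forall>z. poly G z = poly H (z^2)"
  using assms
proof (induction "degree G" arbitrary: G rule: less_induct)
  case less
  obtain a G1 where G1: "G = pCons a G1" by (metis pCons_cases)
  obtain b G2 where G2: "G1 = pCons b G2" by (metis pCons_cases)
  have "b = coeff G 1" by (simp add: G1 G2)
  then have b0: "b = 0" using less.prems by simp
  show ?case
  proof (cases "G2 = 0")
    case True
    then show ?thesis by (intro exI[of _ "[:a:]"]) (simp add: G1 G2 b0)
  next
    case False
    have "degree G2 < degree G" using False by (simp add: G1 G2 b0)
    moreover have "\<forall>k. odd k \<longrightarrow> coeff G2 k = 0"
    proof (intro allI impI)
      fix k :: nat assume "odd k"
      then have "coeff G (Suc (Suc k)) = 0" using less.prems by simp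
      then show "coeff G2 k = 0" by (simp add: G1 G2)
    qed
    ultimately obtain H2 where H2: "\<forall>z. poly G2 z = poly H2 (z^2)" using less.hyps by blast
    show ?thesis
      by (intro exI[of _ "pCons a H2"]) (simp add: G1 G2 b0 H2 power2_eq_square)
  qed
qed


lemma scale_ok:
  fixes u w :: complex
  assumes "of_real c * u = w" "c > 0" "Im w = 0" "0 \<le> Re w"
  shows "Im u = 0 \<and> 0 \<le> Re u"
proof -
  have "Im w = c * Im u" "Re w = c * Re u" using assms(1) by auto
  then show ?thesis using assms(2-4) by (simp add: zero_le_mult_iff)
qed

lemma expSigmaZ_add: "expSigmaZ (a + b) = expSigmaZ b ** expSigmaZ a"
  by (simp add: vec_eq_iff forall_2 mm2 expSigmaZ_def algebra_simps exp_add flip: exp_add)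

theorem mainTheorem5:
  fixes P :: "complex poly" and d :: nat
  assumes "d \<ge> 1"
    and "degree P = d"
    and "has_parity P d"
    and "\<forall>x::real. -1 \<le> x \<and> x \<le> 1 \<longrightarrow> norm (poly P (of_real x)) \<le> 1"
    and "\<forall>x::real. (x \<le> -1 \<or> 1 \<le> x) \<longrightarrow> norm (poly P (of_real x)) \<ge> 1"
    and "even d \<longrightarrow> (\<forall>x::real.
           poly P (\<i> * of_real x) * poly (conj_poly P) (\<i> * of_real x) \<in> \<real> \<and>
           Re (poly P (\<i> * of_real x) * poly (conj_poly P) (\<i> * of_real x)) \<ge> 1)"
  shows "\<exists>\<Phi> :: real list. length \<Phi> = d \<and>
           (\<forall>x::real. -1 \<le> x \<and> x \<le> 1 \<longrightarrow> qspProd \<Phi> x $ 1 $ 1 = poly P (of_real x)) \<and>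
           (\<forall>x::real. x \<in> {-1, 1} \<longrightarrow>
              poly P (of_real x) = of_real x ^ d * (\<Prod>j = 1..d. exp (\<i> * of_real (\<Phi> ! (j - 1))))) \<and>
           (even d \<longrightarrow>
              poly P 0 = exp (- \<i> * of_real (\<Sum>j = 1..d. (-1) ^ j * (\<Phi> ! (j - 1)))))"

proof -
  have par: "\<forall>z. poly P (-z) = (-1)^d * poly P z" using assms(3) by (simp add: has_parity_def)
  define F where "F = 1 - P * conj_poly P"
  have pF: "\<And>z. poly F z = 1 - poly P z * cnj (poly P (cnj z))" by (simp add: F_def poly_conj_poly)
  have pFr: "\<And>x::real. poly F (of_real x) = of_real (1 - (cmod (poly P (of_real x)))^2)"
    by (simp add: pF flip: complex_norm_square)
  have n1: "cmod (poly P (of_real x)) = 1" if "x = 1 \<or> x = -1" for x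
    using assms(4)[rule_format, of x] assms(5)[rule_format, of x] that by (auto intro: order.antisym)
  have F1: "poly F 1 = 0" "poly F (-1) = 0"
    using pFr[of 1] pFr[of "-1"] n1[of 1] n1[of "-1"] by simp_all
  obtain F1 where FF1: "F = [:-1,1:] * F1" using F1(1) poly_eq_0_iff_dvd[of F 1] by (auto elim: dvdE)
  have "poly F1 (-1) = 0" using F1(2) by (simp add: FF1)
  then obtain F2 where FF2: "F1 = [:1,1:] * F2" using poly_eq_0_iff_dvd[of F1 "-1"] by (auto elim: dvdE)
  define G where "G = - F2"
  have FG: "F = [:1,0,-1:] * G"
    by (rule poly_eq_poly_eq_iff[THEN iffD1], rule ext)
       (simp add: FF1 FF2 G_def algebra_simps)
  have pG: "\<And>z. poly F z = (1 - z^2) * poly G z" by (simp add: FG poly_quad power2_eq_square del: mult_pCons_left)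
  have Feven: "poly F (-z) = poly F z" for z
  proof -
    have "(-1::complex)^d = 1 \<or> (-1::complex)^d = -1" by (simp add: minus_one_power_iff)
    then show ?thesis by (auto simp: pF par)
  qed
  have "[:1,0,-1:] * pcompose G [:0,-1:] = [:1,0,-1:] * G"
  proof (rule poly_eq_poly_eq_iff[THEN iffD1], rule ext)
    fix z :: complex
    have "poly ([:1,0,-1:] * pcompose G [:0,-1:]) z = poly F (-z)"
      by (simp add: poly_pcompose pG poly_quad power2_eq_square del: mult_pCons_left)
    also have "\<dots> = poly F z" by (rule Feven)
    finally show "poly ([:1,0,-1:] * pcompose G [:0,-1:]) z = poly ([:1,0,-1:] * G) z"
      by (simp add: FG del: mult_pCons_left)
  qed
  then have "pcompose G [:0,-1:] = G" by (subst (asm) mult_left_cancel) auto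
  note Gc = this
  have Geven: "\<forall>z. poly G (-z) = (-1)^0 * poly G z"
  proof
    fix z :: complex
    have "poly (pcompose G [:0,-1:]) z = poly G (-z)" by (simp add: poly_pcompose)
    then show "poly G (-z) = (-1)^0 * poly G z" using Gc by simp
  qed
  have "\<forall>k. odd k \<longrightarrow> coeff G k = 0" using parity_coeff[OF Geven] by simp
  then obtain H where GH: "\<forall>z. poly G z = poly H (z^2)" using even_poly_sq by blast
  have okG: "ok G y" if "y \<noteq> 1" "y \<noteq> -1" for y
  proof (cases "y^2 < 1")
    case True
    then have "\<bar>y\<bar> < 1" by (simp add: abs_square_less_1)
    then have "-1 \<le> y \<and> y \<le> 1" by auto
    then have c: "cmod (poly P (of_real y)) \<le> 1" using assms(4) by blast
    then have "(cmod (poly P (of_real y)))^2 \<le> 1" by (simp add: power_le_one)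
    then have okF: "ok F y" unfolding ok_def pFr by simp
    show ?thesis
    proof (rule ok_scale[OF okF])
      show "poly F (of_real y) = of_real (1 - y^2) * poly G (of_real y)" by (simp add: pG)
      show "1 - y^2 > 0" using True by simp
    qed
  next
    case False
    have "y^2 \<noteq> 1" using that by (simp add: power2_eq_1_iff)
    then have "y^2 > 1" using False by simp
    then have "\<bar>y\<bar> > 1" by (metis abs_square_less_1 abs_square_eq_1 linorder_neqE_linordered_idom not_less_iff_gr_or_eq)
    then have "y \<le> -1 \<or> 1 \<le> y" by auto
    then have c: "cmod (poly P (of_real y)) \<ge> 1" using assms(5) by blast
    then have "(cmod (poly P (of_real y)))^2 \<ge> 1" by (simp add: one_le_power)
    then have okF: "ok (-F) y" unfolding ok_def by (simp add: pFr)
    show ?thesis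
    proof (rule ok_scale[OF okF])
      show "poly (-F) (of_real y) = of_real (y^2 - 1) * poly G (of_real y)" by (simp add: pG algebra_simps)
      show "y^2 - 1 > 0" using \<open>y^2 > 1\<close> by simp
    qed
  qed
  have pGi: "poly F (\<i> * of_real t) = of_real (1 + t^2) * poly G (\<i> * of_real t)" for t :: real
    by (simp add: pG power_mult_distrib)
  have HG: "poly H (of_real y) = poly G (of_real (sqrt y))" if "0 \<le> y" for y
    using that GH by (simp flip: of_real_power)
  have HGi: "poly H (of_real y) = poly G (\<i> * of_real (sqrt (- y)))" if "y < 0" for y
  proof -
    have "(\<i> * complex_of_real (sqrt (- y)))^2 = of_real y"
      using that by (simp add: power_mult_distrib flip: of_real_power)
    then show ?thesis using GH by simp
  qed
  have okH_pos: "ok H y" if "0 \<le> y" "y \<noteq> 1" for y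
  proof -
    have "sqrt y \<noteq> 1" using that by auto
    moreover have "sqrt y \<noteq> -1" using real_sqrt_ge_zero[OF that(1)] by linarith
    ultimately have "ok G (sqrt y)" by (rule okG)
    then show ?thesis using HG[OF that(1)] by (simp add: ok_def)
  qed
  obtain Q where QG: "Q * conj_poly Q = G" and Qpar: "\<forall>z. poly Q (-z) = (-1)^(Suc d) * poly Q z"
  proof (cases "even d")
    case False
    have okH: "ok H y" if "y \<noteq> 1" for y
    proof (cases "0 \<le> y")
      case True
      then show ?thesis using okH_pos that by blast
    next
      case False
      define t where "t = sqrt (- y)"
      have Pm: "poly P (- (\<i> * of_real t)) = - poly P (\<i> * of_real t)"
        using par \<open>odd d\<close> by simp
      have "poly F (\<i> * of_real t) = of_real (1 + (cmod (poly P (\<i> * of_real t)))^2)"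
        by (simp add: pF Pm flip: complex_norm_square)
      then have "of_real (1 + t^2) * poly G (\<i> * of_real t) = of_real (1 + (cmod (poly P (\<i> * of_real t)))^2)"
        using pGi by simp
      then have "Im (poly G (\<i> * of_real t)) = 0 \<and> 0 \<le> Re (poly G (\<i> * of_real t))"
        by (rule scale_ok) (auto intro: add_pos_nonneg)
      then show ?thesis using HGi[of y] False unfolding ok_def t_def by simp
    qed
    then have "\<forall>y. ok H y" using ok_closure[of "{1}" H] by blast
    then obtain q where q: "H = q * conj_poly q" using FR by blast
    define Q where "Q = pcompose q [:0,0,1:]"
    have pQ: "poly Q z = poly q (z^2)" for z by (simp add: Q_def poly_pcompose power2_eq_square)
    show ?thesis
    proof (rule that[of Q])
      show "Q * conj_poly Q = G"
      proof (rule poly_eq_poly_eq_iff[THEN iffD1], rule ext)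
        fix z :: complex
        have "poly (Q * conj_poly Q) z = poly q (z^2) * cnj (poly q (cnj (z^2)))"
          by (simp add: poly_conj_poly pQ)
        also have "\<dots> = poly H (z^2)" by (simp add: q poly_conj_poly)
        also have "\<dots> = poly G z" using GH by simp
        finally show "poly (Q * conj_poly Q) z = poly G z" .
      qed
      show "\<forall>z. poly Q (- z) = (-1) ^ Suc d * poly Q z" using False by (simp add: pQ)
    qed
  next
    case True
    have "poly P 0 * poly (conj_poly P) 0 \<in> \<real> \<and> 1 \<le> Re (poly P 0 * poly (conj_poly P) 0)"
      using assms(6) True by (metis mult_zero_right of_real_0)
    then have "1 \<le> (cmod (poly P 0))^2" by (simp add: poly_conj_poly flip: complex_norm_square)
    moreover have "cmod (poly P 0) \<le> 1" using assms(4)[rule_format, of 0] by simp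
    ultimately have "(cmod (poly P 0))^2 = 1"
      by (meson order.antisym norm_ge_zero power_le_one)
    then have "poly G 0 = 0" using pFr[of 0] pG[of 0] by simp
    then have "poly H 0 = 0" using GH by (metis power_zero_numeral)
    then obtain K where HK: "H = [:0,1:] * K" using poly_eq_0_iff_dvd[of H 0] by (auto elim: dvdE)
    have pHK: "poly H (of_real y) = of_real y * poly K (of_real y)" for y by (simp add: HK)
    have okK: "ok K y" if "y \<notin> {0,1}" for y
    proof (cases "0 < y")
      case True
      show ?thesis
      proof (rule ok_scale)
        show "ok H y" using okH_pos that True by auto
        show "poly H (of_real y) = of_real y * poly K (of_real y)" by (rule pHK)
      qed (rule True)
    next
      case False
      then have y: "y < 0" using that by auto
      define t where "t = sqrt (- y)"
      have w: "poly P (\<i> * of_real t) * poly (conj_poly P) (\<i> * of_real t) \<in> \<real> \<and>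
           1 \<le> Re (poly P (\<i> * of_real t) * poly (conj_poly P) (\<i> * of_real t))"
        using assms(6) True by blast
      have "poly F (\<i> * of_real t) = 1 - poly P (\<i> * of_real t) * poly (conj_poly P) (\<i> * of_real t)"
        by (simp add: pF poly_conj_poly)
      then have "of_real (1 + t^2) * (- poly G (\<i> * of_real t)) = poly P (\<i> * of_real t) * poly (conj_poly P) (\<i> * of_real t) - 1"
        using pGi[of t] by (simp add: algebra_simps)
      then have "Im (- poly G (\<i> * of_real t)) = 0 \<and> 0 \<le> Re (- poly G (\<i> * of_real t))"
        by (rule scale_ok) (use w in \<open>auto intro: add_pos_nonneg simp: complex_is_Real_iff\<close>)
      then have okmH: "ok (-H) y" using HGi[OF y] unfolding ok_def t_def by simp
      show ?thesis
      proof (rule ok_scale[OF okmH])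
        show "poly (-H) (of_real y) = of_real (-y) * poly K (of_real y)" by (simp add: pHK)
        show "- y > 0" using y by simp
      qed
    qed
    then have "\<forall>y. ok K y" using ok_closure[of "{0,1}" K] by blast
    then obtain k where k: "K = k * conj_poly k" using FR by blast
    define Q where "Q = [:0,1:] * pcompose k [:0,0,1:]"
    have pQ: "poly Q z = z * poly k (z^2)" for z by (simp add: Q_def poly_pcompose power2_eq_square)
    show ?thesis
    proof (rule that[of Q])
      show "Q * conj_poly Q = G"
      proof (rule poly_eq_poly_eq_iff[THEN iffD1], rule ext)
        fix z :: complex
        have "poly (Q * conj_poly Q) z = z^2 * (poly k (z^2) * cnj (poly k (cnj (z^2))))"
          by (simp add: poly_conj_poly pQ power2_eq_square)
        also have "\<dots> = poly H (z^2)" by (simp add: HK k poly_conj_poly)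
        also have "\<dots> = poly G z" using GH by simp
        finally show "poly (Q * conj_poly Q) z = poly G z" .
      qed
      show "\<forall>z. poly Q (- z) = (-1) ^ Suc d * poly Q z" using True by (simp add: pQ)
    qed
  qed
  have degQ: "degree Q \<le> d - 1"
  proof (cases "Q = 0")
    case True then show ?thesis by simp
  next
    case False
    have "coeff (conj_poly Q) (degree Q) \<noteq> 0"
      using False by (simp add: coeff_conj_poly)
    then have cQ: "conj_poly Q \<noteq> 0" by auto
    have dG: "degree G = degree Q + degree Q"
      using QG[symmetric] False cQ by (simp add: degree_mult_eq degree_conj_poly)
    have "G \<noteq> 0" using QG False cQ by auto
    then have dF: "degree F = 2 + degree G" unfolding FG
      by (simp add: degree_mult_eq del: mult_pCons_left)
    have "degree F \<le> d + d" unfolding F_def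
      using degree_diff_le_max[of 1 "P * conj_poly P"] degree_mult_le[of P "conj_poly P"] assms(2)
      by (simp add: degree_conj_poly)
    then show ?thesis using dF dG by linarith
  qed
  have idt: "P * conj_poly P + [:1,0,-1:] * (Q * conj_poly Q) = 1"
  proof -
    have "[:1,0,-1:] * (Q * conj_poly Q) = F" using FG QG by simp
    then show ?thesis by (simp add: F_def)
  qed
  have Q0: "d = 0 \<longrightarrow> Q = 0" using assms(1) by simp
  obtain \<Phi> \<gamma> where \<Phi>: "length \<Phi> = d" "\<forall>x. -1 \<le> x \<and> x \<le> 1 \<longrightarrow>
            qspProd \<Phi> x ** expSigmaZ \<gamma> = Um d (poly P x) (poly Q x) x"
    using qsp_exists[OF _ degQ Q0 par Qpar idt] assms(2) by auto
  obtain \<phi> \<Phi>' where \<Phi>c: "\<Phi> = \<phi> # \<Phi>'" using \<Phi>(1) assms(1) by (cases \<Phi>) auto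
  define \<Psi> where "\<Psi> = (\<phi> + \<gamma>) # \<Phi>'"
  have lenP: "length \<Psi> = d" using \<Phi>(1) by (simp add: \<Psi>_def \<Phi>c)
  have key: "qspProd \<Psi> x = expSigmaZ \<gamma> ** qspProd \<Phi> x" for x
    by (simp add: \<Psi>_def \<Phi>c qspProd_def expSigmaZ_add matrix_mul_assoc)
  have top: "qspProd \<Psi> x $ 1 $ 1 = poly P (of_real x)" if "-1 \<le> x" "x \<le> 1" for x
  proof -
    have e: "(qspProd \<Phi> x ** expSigmaZ \<gamma>) $ 1 $ 1 = poly P (of_real x)"
      using \<Phi>(2) that by (simp add: Um_def)
    have "(qspProd \<Phi> x ** expSigmaZ \<gamma>) $ 1 $ 1 = qspProd \<Phi> x $ 1 $ 1 * exp (\<i> * of_real \<gamma>)"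
      by (simp add: mm2 expSigmaZ_def)
    moreover have "qspProd \<Psi> x $ 1 $ 1 = exp (\<i> * of_real \<gamma>) * qspProd \<Phi> x $ 1 $ 1"
      by (simp add: key mm2 expSigmaZ_def)
    ultimately show ?thesis using e by (simp add: mult.commute)
  qed
  show ?thesis
  proof (intro exI[of _ \<Psi>] conjI allI impI)
    show "length \<Psi> = d" by (rule lenP)
    show "qspProd \<Psi> x $ 1 $ 1 = poly P (of_real x)" if "-1 \<le> x \<and> x \<le> 1" for x
      using top that by blast
    fix x :: real assume "x \<in> {-1, 1}"
    then have x: "x = 1 \<or> x = -1" by auto
    then have "poly P (of_real x) = qspProd \<Psi> x $ 1 $ 1" using top by auto
    also have "\<dots> = of_real x ^ d * (\<Prod>j<d. exp (\<i> * of_real (\<Psi> ! j)))"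
      using qsp_pm1[OF x, of \<Psi>] lenP by simp
    also have "(\<Prod>j<d. exp (\<i> * of_real (\<Psi> ! j))) = (\<Prod>j = 1..d. exp (\<i> * of_real (\<Psi> ! (j - 1))))"
      using prod.atLeast1_atMost_eq[of "\<lambda>j. exp (\<i> * of_real (\<Psi> ! (j - 1)))" d] by simp
    finally show "poly P (of_real x) = of_real x ^ d * (\<Prod>j = 1..d. exp (\<i> * of_real (\<Psi> ! (j - 1))))" .
  next
    assume "even d"
    have "poly P 0 = qspProd \<Psi> 0 $ 1 $ 1" using top[of 0] by simp
    also have "\<dots> = exp (\<i> * of_real (\<Sum>j<d. (-1)^j * \<Psi> ! j))"
      using qsp_zero[of \<Psi>] lenP \<open>even d\<close> by simp
    also have "(\<Sum>j<d. (-1)^j * \<Psi> ! j) = - (\<Sum>j = 1..d. (-1)^j * \<Psi> ! (j - 1))"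
      using sum.atLeast1_atMost_eq[of "\<lambda>j. (-1)^j * \<Psi> ! (j - 1)" d] by (simp add: sum_negf)
    finally show "poly P 0 = exp (- \<i> * of_real (\<Sum>j = 1..d. (-1)^j * \<Psi> ! (j - 1)))" by simp
  qed
qed

end
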